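(* Let $q\in(0,1)$, let $\lambda,\mu\in\mathbb C$ with $\lambda\ne q$, and let $t\in\mathbb{Z}_{\ge0}$. Then, as an identity of rational functions of $w_1,\dots,w_t$, $$\frac{q-\lambda q^t}{q-\lambda}+\sum_{i=0}^{t-1}T_{\sigma^-_{[1,i+1]}}\frac{(q-1)(\lambda-q\mu w_1)}{(q-\lambda)(1-\mu w_1)}=\prod_{i=1}^t\frac{1-q\mu w_i}{1-\mu w_i}.$$
   Context: $\sigma_i$ is the transposition of $i,i+1$; $\sigma^-_{[1,b]}=\sigma_{b-1}\sigma_{b-2}\cdots\sigma_1$ ($=\mathrm{id}$ for $b=1$). Operators on rational functions: $t_i$ swaps $w_i,w_{i+1}$; $T_i=q+\frac{w_{i+1}-qw_i}{w_{i+1}-w_i}(t_i-1)$; $T_{\sigma^-_{[1,b]}}=T_{b-1}T_{b-2}\cdots T_1$ (identity for $b=1$). *)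

theory Defs
  imports Complex_Main
begin

text \<open>Rational functions in w_1, w_2, ... are represented as functions of the
  variable assignment w :: nat => complex (variables are 1-indexed).\<close>

definition swapv :: "nat \<Rightarrow> (nat \<Rightarrow> complex) \<Rightarrow> (nat \<Rightarrow> complex)" where
  "swapv i w = w(i := w (Suc i), Suc i := w i)"

definition Top :: "complex \<Rightarrow> nat \<Rightarrow> ((nat \<Rightarrow> complex) \<Rightarrow> complex) \<Rightarrow> ((nat \<Rightarrow> complex) \<Rightarrow> complex)" where
  "Top q i f = (\<lambda>w. q * f w + (w (Suc i) - q * w i) / (w (Suc i) - w i) * (f (swapv i w) - f w))"

text \<open>T_{sigma^-_[1,b]} = T_(b-1) ... T_1 (T_1 applied first); identity for b = 1.\<close>

definition Tsig :: "complex \<Rightarrow> nat \<Rightarrow> ((nat \<Rightarrow> complex) \<Rightarrow> complex) \<Rightarrow> ((nat \<Rightarrow> complex) \<Rightarrow> complex)" where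
  "Tsig q b f = fold (\<lambda>i g. Top q i g) [1..<b] f"

end

theory Submission
  imports Defs
begin

definition rr :: "complex \<Rightarrow> complex \<Rightarrow> complex \<Rightarrow> complex" where
  "rr Q mu x = (1 - Q * mu * x) / (1 - mu * x)"

definition PP :: "complex \<Rightarrow> complex \<Rightarrow> nat \<Rightarrow> (nat \<Rightarrow> complex) \<Rightarrow> complex" where
  "PP Q mu n v = (\<Prod>i=1..n. rr Q mu (v i))"

definition good :: "complex \<Rightarrow> nat \<Rightarrow> (nat \<Rightarrow> complex) \<Rightarrow> bool" where
  "good mu n v = ((\<forall>i\<in>{1..n}. \<forall>j\<in>{1..n}. i \<noteq> j \<longrightarrow> v i \<noteq> v j) \<and> (\<forall>i\<in>{1..n}. mu * v i \<noteq> 1))"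

lemma two_var:
  assumes "a \<noteq> b" "mu * a \<noteq> 1" "mu * b \<noteq> 1"
  shows "Q * rr Q mu a + (b - Q * a) / (b - a) * (rr Q mu b - rr Q mu a)
         = Q + rr Q mu a * rr Q mu b - rr Q mu a"
proof -
  have d1: "1 - mu * a \<noteq> 0" "1 - mu * b \<noteq> 0" "b - a \<noteq> 0" using assms by auto
  have diff: "rr Q mu b - rr Q mu a = mu * (1 - Q) * (b - a) / ((1 - mu * a) * (1 - mu * b))"
    unfolding rr_def using d1 by (simp add: field_simps)
  have "(b - Q * a) / (b - a) * (rr Q mu b - rr Q mu a) = (b - Q * a) * mu * (1 - Q) / ((1 - mu * a) * (1 - mu * b))"
  proof -
    have D: "(1 - mu * a) * (1 - mu * b) \<noteq> 0" using d1 by simp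
    have gen: "\<And>x y c D. c \<noteq> (0::complex) \<Longrightarrow> D \<noteq> 0 \<Longrightarrow> x / c * (y * c / D) = x * y / D"
      by (simp add: field_simps)
    show ?thesis unfolding diff using gen[OF d1(3) D] by (simp add: mult.assoc)
  qed
  then have e: "Q * rr Q mu a + (b - Q * a) / (b - a) * (rr Q mu b - rr Q mu a)
     = Q * ((1 - Q * mu * a) / (1 - mu * a)) + (b - Q * a) * mu * (1 - Q) / ((1 - mu * a) * (1 - mu * b))"
    unfolding rr_def by simp
  have "Q * ((1 - Q * mu * a) / (1 - mu * a)) + (b - Q * a) * mu * (1 - Q) / ((1 - mu * a) * (1 - mu * b))
     = Q + (1 - Q * mu * a) / (1 - mu * a) * ((1 - Q * mu * b) / (1 - mu * b)) - (1 - Q * mu * a) / (1 - mu * a)"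
    using d1(1,2) by (simp add: divide_simps) algebra
  then show ?thesis unfolding e unfolding rr_def .
qed

lemma Tsig_Suc: "1 \<le> n \<Longrightarrow> Tsig Q (Suc n) f = Top Q n (Tsig Q n f)"
  unfolding Tsig_def by simp

lemma Tsig_1: "Tsig Q 1 f = f" unfolding Tsig_def by simp

lemma PP_Suc: "PP Q mu (Suc n) v = PP Q mu n v * rr Q mu (v (Suc n))"
  unfolding PP_def by (simp add: prod.nat_ivl_Suc')

lemma good_mono: "good mu (Suc n) v \<Longrightarrow> good mu n v"
  unfolding good_def by auto

lemma PP_cong: "(\<And>i. 1 \<le> i \<Longrightarrow> i \<le> n \<Longrightarrow> v i = u i) \<Longrightarrow> PP Q mu n v = PP Q mu n u"
  unfolding PP_def by (rule prod.cong) auto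

lemma good_swap:
  assumes "good mu (Suc n) v" "1 \<le> n"
  shows "good mu n (swapv n v)"
proof -
  have sw: "\<And>i. i \<in> {1..n} \<Longrightarrow> swapv n v i = (if i = n then v (Suc n) else v i)"
    unfolding swapv_def by auto
  show ?thesis using assms unfolding good_def
    by (simp add: sw)
qed

lemma alg1: "Q * (p * ra - p - K) + c * ((p * rb - p - K) - (p * ra - p - K))
   = p * (Q * ra + c * (rb - ra)) - Q * p - Q * (K::complex)"
  by (simp add: algebra_simps)

lemma alg2: "A' = A + B \<Longrightarrow> A + S = P \<Longrightarrow> T = P' - P - B \<Longrightarrow> A' + (S + T) = (P'::complex)"
  by algebra

lemma key:
  fixes Q lam mu :: complex
  assumes ql: "Q \<noteq> lam" and n: "1 \<le> n"
  defines "g \<equiv> (\<lambda>v. (Q - 1) * (lam - Q * mu * v 1) / ((Q - lam) * (1 - mu * v 1)))"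
  shows "good mu n v \<Longrightarrow> Tsig Q n g v = PP Q mu n v - PP Q mu (n - 1) v
            - lam * Q ^ (n - 1) * (1 - Q) / (Q - lam)"
  using n
proof (induction n arbitrary: v rule: dec_induct)
  case base
  then have m: "1 - mu * v 1 \<noteq> 0" unfolding good_def by auto
  have ql': "Q - lam \<noteq> 0" using ql by auto
  show ?case unfolding Tsig_1 g_def PP_def rr_def using m ql'
    by (simp add: field_simps)
next
  case (step n)
  define K where "K = lam * Q ^ (n - 1) * (1 - Q) / (Q - lam)"
  have KS: "lam * Q ^ (Suc n - 1) * (1 - Q) / (Q - lam) = Q * K"
    unfolding K_def using step.hyps by (cases n) auto
  have gv: "good mu n v" using good_mono step.prems .
  have gs: "good mu n (swapv n v)" using good_swap step.prems step.hyps by blast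
  have H1: "Tsig Q n g v = PP Q mu n v - PP Q mu (n - 1) v - K"
    using step.IH gv K_def by simp
  have H2: "Tsig Q n g (swapv n v) = PP Q mu n (swapv n v) - PP Q mu (n - 1) (swapv n v) - K"
    using step.IH gs K_def by simp
  obtain m where mn: "n = Suc m" using step.hyps by (cases n) auto
  have eqm: "PP Q mu m (swapv n v) = PP Q mu m v"
    by (rule PP_cong) (auto simp: swapv_def mn)
  have nm1: "PP Q mu (n - 1) v = PP Q mu m v" using mn by simp
  have nm2: "PP Q mu (n - 1) (swapv n v) = PP Q mu m v" using mn eqm by simp
  have pn: "PP Q mu n v = PP Q mu m v * rr Q mu (v n)" unfolding mn by (rule PP_Suc)
  have psn: "PP Q mu n (swapv n v) = PP Q mu m v * rr Q mu (v (Suc n))"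
    using PP_Suc[of Q mu m "swapv n v"] eqm mn by (simp add: swapv_def)
  have ab: "v n \<noteq> v (Suc n)" "mu * v n \<noteq> 1" "mu * v (Suc n) \<noteq> 1"
    using step.prems step.hyps unfolding good_def by auto
  have tv: "Q * rr Q mu (v n) + (v (Suc n) - Q * v n) / (v (Suc n) - v n)
       * (rr Q mu (v (Suc n)) - rr Q mu (v n))
       = Q + rr Q mu (v n) * rr Q mu (v (Suc n)) - rr Q mu (v n)"
    using two_var ab by blast
  have "Tsig Q (Suc n) g v = Q * Tsig Q n g v + (v (Suc n) - Q * v n) / (v (Suc n) - v n)
        * (Tsig Q n g (swapv n v) - Tsig Q n g v)"
    using Tsig_Suc[of n] step.hyps by (simp add: Top_def)
  also have "\<dots> = PP Q mu m v * (Q * rr Q mu (v n) + (v (Suc n) - Q * v n) / (v (Suc n) - v n)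
       * (rr Q mu (v (Suc n)) - rr Q mu (v n))) - Q * PP Q mu m v - Q * K"
    unfolding H1 H2 pn psn nm1 nm2 by (rule alg1)
  also have "\<dots> = PP Q mu m v * (Q + rr Q mu (v n) * rr Q mu (v (Suc n)) - rr Q mu (v n))
       - Q * PP Q mu m v - Q * K" using tv by simp
  also have "\<dots> = PP Q mu (Suc n) v - PP Q mu (Suc n - 1) v - lam * Q ^ (Suc n - 1) * (1 - Q) / (Q - lam)"
    unfolding KS PP_Suc by (simp add: algebra_simps pn)
  finally show ?case .
qed

lemma sumlem:
  fixes Q lam mu :: complex
  assumes ql: "Q \<noteq> lam"
  defines "g \<equiv> (\<lambda>v. (Q - 1) * (lam - Q * mu * v 1) / ((Q - lam) * (1 - mu * v 1)))"
  shows "good mu t w \<Longrightarrow> (Q - lam * Q ^ t) / (Q - lam) + (\<Sum>i<t. Tsig Q (i + 1) g w) = PP Q mu t w"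
proof (induction t)
  case 0
  have "Q - lam \<noteq> 0" using ql by auto
  then show ?case by (simp add: PP_def)
next
  case (Suc t)
  have ql': "Q - lam \<noteq> 0" using ql by auto
  have IH: "(Q - lam * Q ^ t) / (Q - lam) + (\<Sum>i<t. Tsig Q (i + 1) g w) = PP Q mu t w"
    using Suc good_mono by blast
  have k: "Tsig Q (Suc t) g w = PP Q mu (Suc t) w - PP Q mu t w - lam * Q ^ t * (1 - Q) / (Q - lam)"
    using key[OF ql, of "Suc t" mu w] Suc.prems unfolding g_def by simp
  have "(Q - lam * Q ^ Suc t) / (Q - lam) = (Q - lam * Q ^ t) / (Q - lam) + lam * Q ^ t * (1 - Q) / (Q - lam)"
  proof -
    have e: "Q - lam * Q ^ Suc t = (Q - lam * Q ^ t) + lam * Q ^ t * (1 - Q)" by (simp add: algebra_simps)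
    show ?thesis by (subst e) (simp only: add_divide_distrib)
  qed
  then show ?case using alg2[OF _ IH k] by simp
qed

theorem lemma6p2:
  fixes q :: real and lam mu :: complex and t :: nat and w :: "nat \<Rightarrow> complex"
  assumes "0 < q" and "q < 1" and "lam \<noteq> complex_of_real q"
    and "\<forall>i\<in>{1..t}. \<forall>j\<in>{1..t}. i \<noteq> j \<longrightarrow> w i \<noteq> w j"
    and "\<forall>i\<in>{1..t}. mu * w i \<noteq> 1"
  shows "(complex_of_real q - lam * complex_of_real q ^ t) / (complex_of_real q - lam)
      + (\<Sum>i<t. Tsig (complex_of_real q) (i + 1)
            (\<lambda>v. (complex_of_real q - 1) * (lam - complex_of_real q * mu * v 1)
                 / ((complex_of_real q - lam) * (1 - mu * v 1))) w)
    = (\<Prod>i=1..t. (1 - complex_of_real q * mu * w i) / (1 - mu * w i))"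
proof -
  have "good mu t w" using assms unfolding good_def by blast
  from sumlem[of "complex_of_real q" lam mu t w, OF _ this] assms(3)
  show ?thesis unfolding PP_def rr_def by auto
qed

end
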